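(* Let $R\subseteq\mathbb Q$ be an infinite set such that there exist computable functions $\tau_1,\tau_2\colon\mathbb N\to\mathbb Z$ with $\tau_2(k)\neq0$ for all $k\in\mathbb N$ and $\{\tau_1(k)/\tau_2(k):k\in\mathbb N\}=R$. If the set of all Diophantine equations which have at most finitely many solutions in $R$ is recursively enumerable, then there exists an algorithm which decides, for any given Diophantine equation, whether or not it has a solution in $R$.
   Context: $\mathbb N=\{0,1,2,\ldots\}$. A Diophantine equation is an equation $D(x_1,\ldots,x_n)=0$ with $D\in\mathbb Z[x_1,\ldots,x_n]$ for some $n\ge1$; such equations are coded as natural numbers so that recursiveness and recursive enumerability of sets of them make sense. A solution in $R$ means a tuple in $R^n$. *)

theory Defs
  imports Complex_Main "HOL-Library.Nat_Bijection"
begin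

datatype recf =
    RZero
  | RSuc
  | RProj nat
  | RComp recf "recf list"
  | RPrim recf recf
  | RMin recf

inductive reval :: "recf \<Rightarrow> nat list \<Rightarrow> nat \<Rightarrow> bool" where
  zero: "reval RZero xs 0"
| suc: "reval RSuc (x # xs) (Suc x)"
| proj: "i < length xs \<Longrightarrow> reval (RProj i) xs (xs ! i)"
| comp: "length ys = length gs \<Longrightarrow> (\<forall>i < length gs. reval (gs ! i) xs (ys ! i))
          \<Longrightarrow> reval f ys z \<Longrightarrow> reval (RComp f gs) xs z"
| prim0: "reval f xs y \<Longrightarrow> reval (RPrim f g) (0 # xs) y"
| primS: "reval (RPrim f g) (n # xs) y \<Longrightarrow> reval g (y # n # xs) z
          \<Longrightarrow> reval (RPrim f g) (Suc n # xs) z"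
| mini: "reval f (n # xs) 0 \<Longrightarrow> (\<forall>m < n. \<exists>y. reval f (m # xs) (Suc y))
          \<Longrightarrow> reval (RMin f) xs n"

definition computable_int_fun :: "(nat \<Rightarrow> int) \<Rightarrow> bool" where
  "computable_int_fun \<tau> \<longleftrightarrow> (\<exists>f. \<forall>k. reval f [k] (int_encode (\<tau> k)))"

definition rec_enum :: "nat set \<Rightarrow> bool" where
  "rec_enum A \<longleftrightarrow> (\<exists>f. A = {n. \<exists>y. reval f [n] y})"

datatype dpoly = PVar nat | PConst int | PAdd dpoly dpoly | PMul dpoly dpoly

fun peval :: "(nat \<Rightarrow> 'a::comm_ring_1) \<Rightarrow> dpoly \<Rightarrow> 'a" where
  "peval x (PVar i) = x i"
| "peval x (PConst c) = of_int c"
| "peval x (PAdd p q) = peval x p + peval x q"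
| "peval x (PMul p q) = peval x p * peval x q"

fun pvars :: "dpoly \<Rightarrow> nat set" where
  "pvars (PVar i) = {i}"
| "pvars (PConst c) = {}"
| "pvars (PAdd p q) = pvars p \<union> pvars q"
| "pvars (PMul p q) = pvars p \<union> pvars q"

text \<open>A Diophantine equation D(x_1,...,x_n) = 0 is a pair (n, D) with n >= 1 and
  all variables of D among x_0,...,x_(n-1).\<close>
type_synonym dioph_eq = "nat \<times> dpoly"

definition valid_eq :: "dioph_eq \<Rightarrow> bool" where
  "valid_eq e \<longleftrightarrow> fst e \<ge> 1 \<and> pvars (snd e) \<subseteq> {..<fst e}"

definition solutions_in :: "rat set \<Rightarrow> dioph_eq \<Rightarrow> rat list set" where
  "solutions_in R e = {xs. length xs = fst e \<and> set xs \<subseteq> R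
                          \<and> peval (\<lambda>i. xs ! i) (snd e) = 0}"

fun pcode :: "dpoly \<Rightarrow> nat" where
  "pcode (PVar i) = 4 * i"
| "pcode (PConst c) = 4 * int_encode c + 1"
| "pcode (PAdd p q) = 4 * prod_encode (pcode p, pcode q) + 2"
| "pcode (PMul p q) = 4 * prod_encode (pcode p, pcode q) + 3"

definition eq_code :: "dioph_eq \<Rightarrow> nat" where
  "eq_code e = prod_encode (fst e, pcode (snd e))"

end

theory Submission
  imports Defs
begin


definition rc :: "nat \<Rightarrow> recf \<Rightarrow> (nat list \<Rightarrow> nat) \<Rightarrow> bool" where
  "rc n F f \<longleftrightarrow> (\<forall>xs. length xs = n \<longrightarrow> reval F xs (f xs))"

definition recfn :: "nat \<Rightarrow> (nat list \<Rightarrow> nat) \<Rightarrow> bool" where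
  "recfn n f \<longleftrightarrow> (\<exists>F. rc n F f)"

lemma recfn_cong: "recfn n f \<Longrightarrow> (\<And>xs. length xs = n \<Longrightarrow> f xs = g xs) \<Longrightarrow> recfn n g"
  unfolding recfn_def rc_def by metis

lemma recfn_const: "recfn n (\<lambda>_. c)"
proof (induction c)
  case 0
  then show ?case unfolding recfn_def rc_def by (blast intro: reval.zero)
next
  case (Suc c)
  then obtain F where F: "rc n F (\<lambda>_. c)" unfolding recfn_def by blast
  have "rc n (RComp RSuc [F]) (\<lambda>_. Suc c)"
    unfolding rc_def
  proof (intro allI impI)
    fix xs :: "nat list" assume "length xs = n"
    hence "reval F xs c" using F unfolding rc_def by auto
    thus "reval (RComp RSuc [F]) xs (Suc c)"
      by (intro reval.comp[where ys="[c]"]) (auto intro: reval.suc)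
  qed
  thus ?case unfolding recfn_def by blast
qed

lemma recfn_proj: "i < n \<Longrightarrow> recfn n (\<lambda>xs. xs ! i)"
  unfolding recfn_def rc_def by (blast intro: reval.proj)

lemma recfn_comp:
  assumes "recfn (length gs) f" and "\<forall>g\<in>set gs. recfn n g"
  shows "recfn n (\<lambda>xs. f (map (\<lambda>g. g xs) gs))"
proof -
  obtain F where F: "rc (length gs) F f" using assms(1) unfolding recfn_def by blast
  obtain \<Phi> where P: "\<forall>g\<in>set gs. rc n (\<Phi> g) g" using assms(2) unfolding recfn_def by metis
  have "rc n (RComp F (map \<Phi> gs)) (\<lambda>xs. f (map (\<lambda>g. g xs) gs))"
    unfolding rc_def
  proof (intro allI impI)
    fix xs :: "nat list" assume L: "length xs = n"
    show "reval (RComp F (map \<Phi> gs)) xs (f (map (\<lambda>g. g xs) gs))"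
    proof (rule reval.comp[where ys="map (\<lambda>g. g xs) gs"])
      show "\<forall>i<length (map \<Phi> gs). reval (map \<Phi> gs ! i) xs (map (\<lambda>g. g xs) gs ! i)"
        using P L unfolding rc_def by auto
      show "reval F (map (\<lambda>g. g xs) gs) (f (map (\<lambda>g. g xs) gs))"
        using F unfolding rc_def by auto
    qed simp
  qed
  thus ?thesis unfolding recfn_def by blast
qed

fun primh :: "(nat list \<Rightarrow> nat) \<Rightarrow> (nat list \<Rightarrow> nat) \<Rightarrow> nat \<Rightarrow> nat list \<Rightarrow> nat" where
  "primh f g 0 ys = f ys"
| "primh f g (Suc k) ys = g (primh f g k ys # k # ys)"

lemma recfn_prim:
  assumes "recfn n f" "recfn (Suc (Suc n)) g"
  shows "recfn (Suc n) (\<lambda>xs. primh f g (hd xs) (tl xs))"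
proof -
  obtain F where F: "rc n F f" using assms(1) unfolding recfn_def by blast
  obtain G where G: "rc (Suc (Suc n)) G g" using assms(2) unfolding recfn_def by blast
  have *: "reval (RPrim F G) (k # ys) (primh f g k ys)" if "length ys = n" for k ys
    using that
  proof (induction k)
    case 0 thus ?case using F unfolding rc_def by (auto intro: reval.prim0)
    case (Suc k) thus ?case using G unfolding rc_def by (auto intro: reval.primS)
  qed
  have "rc (Suc n) (RPrim F G) (\<lambda>xs. primh f g (hd xs) (tl xs))"
    unfolding rc_def
  proof (intro allI impI)
    fix xs :: "nat list" assume "length xs = Suc n"
    then obtain k ys where "xs = k # ys" "length ys = n" by (cases xs) auto
    thus "reval (RPrim F G) xs (primh f g (hd xs) (tl xs))" using * by simp
  qed
  thus ?thesis unfolding recfn_def by blast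
qed

lemma reval_min:
  assumes F: "rc (Suc n) F f" and L: "length xs = n" and E: "f (m # xs) = 0"
  shows "reval (RMin F) xs (LEAST m. f (m # xs) = 0)"
proof (rule reval.mini)
  have "f ((LEAST m. f (m # xs) = 0) # xs) = 0" using E by (rule LeastI)
  thus "reval F ((LEAST m. f (m # xs) = 0) # xs) 0" using F L unfolding rc_def
    by (metis length_Cons)
  show "\<forall>m<LEAST m. f (m # xs) = 0. \<exists>y. reval F (m # xs) (Suc y)"
  proof (intro allI impI)
    fix m' assume "m' < (LEAST m. f (m # xs) = 0)"
    hence "f (m' # xs) \<noteq> 0" using not_less_Least by blast
    then obtain y where "f (m' # xs) = Suc y" by (cases "f (m' # xs)") auto
    thus "\<exists>y. reval F (m' # xs) (Suc y)" using F L unfolding rc_def by (metis length_Cons)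
  qed
qed

lemma recfn_min:
  assumes "recfn (Suc n) f" and "\<And>xs. length xs = n \<Longrightarrow> \<exists>m. f (m # xs) = 0"
  shows "recfn n (\<lambda>xs. LEAST m. f (m # xs) = 0)"
proof -
  obtain F where F: "rc (Suc n) F f" using assms(1) unfolding recfn_def by blast
  have "rc n (RMin F) (\<lambda>xs. LEAST m. f (m # xs) = 0)"
    unfolding rc_def using reval_min[OF F] assms(2) by blast
  thus ?thesis unfolding recfn_def by blast
qed


lemma map_nth_drop: "map (\<lambda>i. ys ! (k + i)) [0..<length ys - k] = drop k ys"
  by (rule nth_equalityI) auto

lemma recfn_drop:
  assumes "recfn (length l + m) h" "\<forall>\<phi>\<in>set l. recfn n \<phi>" "k + m = n"
  shows "recfn n (\<lambda>ys. h (map (\<lambda>\<phi>. \<phi> ys) l @ drop k ys))"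
proof -
  let ?L = "l @ map (\<lambda>i ys. ys ! (k + i)) [0..<m]"
  have A: "recfn n (\<lambda>ys. h (map (\<lambda>\<phi>. \<phi> ys) ?L))"
    using assms by (intro recfn_comp) (auto intro: recfn_proj)
  have B: "map (\<lambda>\<phi>. \<phi> ys) ?L = map (\<lambda>\<phi>. \<phi> ys) l @ drop k ys" if "length ys = n" for ys
  proof -
    have "map (\<lambda>i. ys ! (k + i)) [0..<m] = drop k ys"
      using map_nth_drop[of ys k] that assms(3) by (metis add_diff_cancel_left')
    thus ?thesis by (simp add: comp_def)
  qed
  show ?thesis by (rule recfn_cong[OF A]) (use B in simp)
qed

lemma recfn_comp1: "recfn 1 h \<Longrightarrow> recfn n f \<Longrightarrow> recfn n (\<lambda>xs. h [f xs])"
  using recfn_comp[of "[f]" h n] by simp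

lemma recfn_comp2: "recfn 2 h \<Longrightarrow> recfn n f \<Longrightarrow> recfn n g \<Longrightarrow> recfn n (\<lambda>xs. h [f xs, g xs])"
  using recfn_comp[of "[f,g]" h n] by (simp add: numeral_2_eq_2)

lemma recfn_comp3: "recfn 3 h \<Longrightarrow> recfn n f \<Longrightarrow> recfn n g \<Longrightarrow> recfn n k \<Longrightarrow>
   recfn n (\<lambda>xs. h [f xs, g xs, k xs])"
  using recfn_comp[of "[f,g,k]" h n] by (simp add: numeral_3_eq_3)

lemma recfn_lift: "recfn n f \<Longrightarrow> recfn (Suc n) (\<lambda>ys. f (tl ys))"
  using recfn_drop[of "[]" n f "Suc n" 1] by (simp add: drop_Suc)

lemma len2: "length xs = 2 \<Longrightarrow> xs = [xs!0, xs!1]"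
  by (cases xs; cases "tl xs") auto

lemma len1: "length xs = 1 \<Longrightarrow> xs = [xs!0]"
  by (cases xs) auto

lemma recfn_Suc1: "recfn 1 (\<lambda>ys. Suc (ys!0))"
  unfolding recfn_def rc_def by (metis len1 reval.suc)

lemma recfn_Suc: "recfn n f \<Longrightarrow> recfn n (\<lambda>xs. Suc (f xs))"
  using recfn_comp1[OF recfn_Suc1] by simp

lemma primh_add: "primh (\<lambda>ys. ys!0) (\<lambda>ys. Suc (ys!0)) k ys = k + ys!0"
  by (induction k) auto

lemma add2: "recfn 2 (\<lambda>ys. ys!0 + ys!1)"
proof -
  have "recfn (Suc (Suc 0)) (\<lambda>xs. primh (\<lambda>ys. ys!0) (\<lambda>ys. Suc (ys!0)) (hd xs) (tl xs))"
    by (intro recfn_prim recfn_proj recfn_Suc) auto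
  thus ?thesis unfolding numeral_2_eq_2 by (rule recfn_cong) (metis len2 primh_add numeral_2_eq_2 One_nat_def list.sel nth_Cons_0 nth_Cons_Suc)
qed

lemma recfn_add: "recfn n f \<Longrightarrow> recfn n g \<Longrightarrow> recfn n (\<lambda>xs. f xs + g xs)"
  using recfn_comp2[OF add2] by simp

lemma primh_mult: "primh (\<lambda>ys. 0) (\<lambda>ys. ys!0 + ys!2) k ys = k * ys!0"
  by (induction k) auto

lemma mult2: "recfn 2 (\<lambda>ys. ys!0 * ys!1)"
proof -
  have "recfn (Suc (Suc 0)) (\<lambda>xs. primh (\<lambda>ys. 0) (\<lambda>ys. ys!0 + ys!2) (hd xs) (tl xs))"
    by (intro recfn_prim recfn_proj recfn_add recfn_const) auto
  thus ?thesis unfolding numeral_2_eq_2 by (rule recfn_cong) (metis len2 primh_mult numeral_2_eq_2 One_nat_def list.sel nth_Cons_0 nth_Cons_Suc)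
qed

lemma recfn_mult: "recfn n f \<Longrightarrow> recfn n g \<Longrightarrow> recfn n (\<lambda>xs. f xs * g xs)"
  using recfn_comp2[OF mult2] by simp

lemma primh_pred: "primh (\<lambda>ys. 0) (\<lambda>ys. ys!1) k ys = k - 1"
  by (induction k) auto

lemma pred1: "recfn 1 (\<lambda>ys. ys!0 - 1)"
proof -
  have "recfn (Suc 0) (\<lambda>xs. primh (\<lambda>ys. 0) (\<lambda>ys. ys!1) (hd xs) (tl xs))"
    by (intro recfn_prim recfn_proj recfn_const) auto
  thus ?thesis unfolding One_nat_def by (rule recfn_cong) (metis len1 primh_pred One_nat_def list.sel nth_Cons_0)
qed

lemma recfn_pred: "recfn n f \<Longrightarrow> recfn n (\<lambda>xs. f xs - 1)"
  using recfn_comp1[OF pred1] by simp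

lemma primh_sub: "primh (\<lambda>ys. ys!0) (\<lambda>ys. ys!0 - 1) k ys = ys!0 - k"
  by (induction k) auto

lemma sub2: "recfn 2 (\<lambda>ys. ys!1 - ys!0)"
proof -
  have "recfn (Suc (Suc 0)) (\<lambda>xs. primh (\<lambda>ys. ys!0) (\<lambda>ys. ys!0 - 1) (hd xs) (tl xs))"
    by (intro recfn_prim recfn_proj recfn_pred) auto
  thus ?thesis unfolding numeral_2_eq_2 by (rule recfn_cong) (metis len2 primh_sub numeral_2_eq_2 One_nat_def list.sel nth_Cons_0 nth_Cons_Suc)
qed

lemma recfn_sub: "recfn n f \<Longrightarrow> recfn n g \<Longrightarrow> recfn n (\<lambda>xs. f xs - g xs)"
  using recfn_comp2[OF sub2, of n g f] by simp

definition recpred :: "nat \<Rightarrow> (nat list \<Rightarrow> bool) \<Rightarrow> bool" where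
  "recpred n P \<longleftrightarrow> recfn n (\<lambda>xs. if P xs then 1 else 0)"

lemma recpred_eq: "recfn n f \<Longrightarrow> recfn n g \<Longrightarrow> recpred n (\<lambda>xs. f xs = g xs)"
  unfolding recpred_def
  by (rule recfn_cong[where f="\<lambda>xs. 1 - ((f xs - g xs) + (g xs - f xs))"])
     (auto intro!: recfn_sub recfn_add recfn_const)

lemma recpred_less: "recfn n f \<Longrightarrow> recfn n g \<Longrightarrow> recpred n (\<lambda>xs. f xs < g xs)"
  unfolding recpred_def
  by (rule recfn_cong[where f="\<lambda>xs. 1 - (1 - (g xs - f xs))"])
     (auto intro!: recfn_sub recfn_add recfn_const)

lemma recpred_not: "recpred n P \<Longrightarrow> recpred n (\<lambda>xs. \<not> P xs)"
  unfolding recpred_def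
  by (rule recfn_cong[where f="\<lambda>xs. 1 - (if P xs then 1 else 0)"])
     (auto intro!: recfn_sub recfn_const)

lemma recpred_and: "recpred n P \<Longrightarrow> recpred n Q \<Longrightarrow> recpred n (\<lambda>xs. P xs \<and> Q xs)"
  unfolding recpred_def
  by (rule recfn_cong[where f="\<lambda>xs. (if P xs then 1 else 0) * (if Q xs then 1 else 0)"])
     (auto intro!: recfn_mult)

lemma recpred_or: "recpred n P \<Longrightarrow> recpred n Q \<Longrightarrow> recpred n (\<lambda>xs. P xs \<or> Q xs)"
  using recpred_not[OF recpred_and[OF recpred_not recpred_not], of n P Q] by simp

lemma recfn_if: "recpred n P \<Longrightarrow> recfn n a \<Longrightarrow> recfn n b \<Longrightarrow> recfn n (\<lambda>xs. if P xs then a xs else b xs)"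
  unfolding recpred_def
  by (rule recfn_cong[where f="\<lambda>xs. (if P xs then 1 else 0) * a xs + (1 - (if P xs then 1 else 0)) * b xs"])
     (auto intro!: recfn_mult recfn_add recfn_sub recfn_const)

lemma recfn_least:
  assumes "recpred (Suc n) P" "\<And>xs. length xs = n \<Longrightarrow> \<exists>m. P (m # xs)"
  shows "recfn n (\<lambda>xs. LEAST m. P (m # xs))"
proof -
  have "recfn (Suc n) (\<lambda>xs. 1 - (if P xs then 1 else 0))"
    using assms(1) unfolding recpred_def by (intro recfn_sub recfn_const)
  hence "recfn n (\<lambda>xs. LEAST m. 1 - (if P (m # xs) then 1 else 0) = (0::nat))"
    by (rule recfn_min) (use assms(2) in fastforce)
  thus ?thesis by (rule recfn_cong) (auto intro!: arg_cong[where f=Least])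
qed

lemma recfn_hd: "recfn (Suc n) hd"
  by (rule recfn_cong[OF recfn_proj[of 0]]) (auto simp: hd_conv_nth, metis hd_conv_nth list.size(3) nat.distinct(1))

lemma div_least: "0 < c \<Longrightarrow> (LEAST q. (x::nat) < c * Suc q) = x div c"
proof (rule Least_equality)
  assume "0 < c" thus "x < c * Suc (x div c)"
    by (metis dividend_less_div_times mult.commute mult_Suc_right add.commute)
next
  fix y assume "0 < c" "x < c * Suc y"
  thus "x div c \<le> y" by (metis less_Suc_eq_le less_mult_imp_div_less mult.commute)
qed

lemma recfn_div: "0 < c \<Longrightarrow> recfn n f \<Longrightarrow> recfn n (\<lambda>xs. f xs div c)"
proof -
  assume c: "0 < c" and f: "recfn n f"
  have "recfn (Suc 0) (\<lambda>xs. LEAST q. (q # xs)!1 < c * Suc ((q # xs)!0))"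
  proof (rule recfn_least)
    show "recpred (Suc (Suc 0)) (\<lambda>ys. ys!1 < c * Suc (ys!0))"
      by (intro recpred_less recfn_mult recfn_const recfn_Suc recfn_proj) auto
    fix xs :: "nat list"
    have "xs!0 < c * Suc (xs!0)" using c by (cases c) auto
    thus "\<exists>m. (m # xs)!1 < c * Suc ((m # xs)!0)" by auto
  qed
  hence "recfn 1 (\<lambda>xs. xs!0 div c)"
    unfolding One_nat_def by (rule recfn_cong) (simp del: mult_Suc_right add: div_least[OF c])
  from recfn_comp1[OF this f] show ?thesis by simp
qed

lemma recfn_mod: "0 < c \<Longrightarrow> recfn n f \<Longrightarrow> recfn n (\<lambda>xs. f xs mod c)"
proof -
  assume "0 < c" "recfn n f"
  hence "recfn n (\<lambda>xs. f xs - c * (f xs div c))"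
    by (intro recfn_sub recfn_mult recfn_const recfn_div)
  thus ?thesis by (rule recfn_cong) (simp add: minus_mult_div_eq_mod)
qed


lemma recfn_triangle: "recfn n f \<Longrightarrow> recfn n (\<lambda>xs. triangle (f xs))"
proof -
  assume "recfn n f"
  hence "recfn n (\<lambda>xs. (f xs * Suc (f xs)) div 2)"
    by (intro recfn_div recfn_mult recfn_Suc) auto
  thus ?thesis by (rule recfn_cong) (simp add: triangle_def)
qed

lemma recfn_pe: "recfn n f \<Longrightarrow> recfn n g \<Longrightarrow> recfn n (\<lambda>xs. prod_encode (f xs, g xs))"
proof -
  assume "recfn n f" "recfn n g"
  hence "recfn n (\<lambda>xs. triangle (f xs + g xs) + f xs)"
    by (intro recfn_add recfn_triangle)
  thus ?thesis by (rule recfn_cong) (simp add: prod_encode_def)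
qed

lemma triangle_mono: "a \<le> b \<Longrightarrow> triangle a \<le> triangle b"
  by (induction b) (auto simp: le_Suc_eq)

lemma pdec_least:
  assumes "prod_decode m = (a, b)"
  shows "(LEAST s. m < triangle (Suc s)) = a + b"
proof -
  have m: "m = triangle (a + b) + a"
    using prod_decode_inverse[of m] assms by (simp add: prod_encode_def)
  show ?thesis
  proof (rule Least_equality)
    show "m < triangle (Suc (a + b))" using m by simp
    fix s assume "m < triangle (Suc s)"
    moreover have "s < a + b \<Longrightarrow> triangle (Suc s) \<le> m"
      using triangle_mono[of "Suc s" "a + b"] m by simp
    ultimately show "a + b \<le> s" by linarith
  qed
qed

lemma pdec_sum: "recfn n f \<Longrightarrow> recfn n (\<lambda>xs. fst (prod_decode (f xs)) + snd (prod_decode (f xs)))"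
proof -
  assume f: "recfn n f"
  have "recfn (Suc 0) (\<lambda>xs. LEAST s. (s # xs)!1 < triangle (Suc ((s # xs)!0)))"
  proof (rule recfn_least)
    show "recpred (Suc (Suc 0)) (\<lambda>ys. ys!1 < triangle (Suc (ys!0)))"
      by (intro recpred_less recfn_triangle recfn_Suc recfn_proj) auto
    fix xs :: "nat list"
    have "xs!0 < triangle (Suc (xs!0))" by simp
    thus "\<exists>m. (m # xs)!1 < triangle (Suc ((m # xs)!0))" by (intro exI[of _ "xs!0"]) (simp del: triangle_Suc)
  qed
  hence "recfn 1 (\<lambda>xs. fst (prod_decode (xs!0)) + snd (prod_decode (xs!0)))"
    unfolding One_nat_def
    by (rule recfn_cong) (simp del: triangle_Suc add: pdec_least[OF prod.collapse[symmetric]])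
  from recfn_comp1[OF this f] show ?thesis by simp
qed

lemma recfn_fst: "recfn n f \<Longrightarrow> recfn n (\<lambda>xs. fst (prod_decode (f xs)))"
proof -
  assume f: "recfn n f"
  hence "recfn n (\<lambda>xs. f xs - triangle (fst (prod_decode (f xs)) + snd (prod_decode (f xs))))"
    by (intro recfn_sub recfn_triangle pdec_sum)
  moreover have "f xs - triangle (fst (prod_decode (f xs)) + snd (prod_decode (f xs))) = fst (prod_decode (f xs))" for xs
  proof -
    obtain a b where ab: "prod_decode (f xs) = (a, b)" by fastforce
    hence "f xs = triangle (a + b) + a" using prod_decode_inverse[of "f xs"] by (simp add: prod_encode_def)
    thus ?thesis using ab by simp
  qed
  ultimately show ?thesis by simp
qed

lemma recfn_snd: "recfn n f \<Longrightarrow> recfn n (\<lambda>xs. snd (prod_decode (f xs)))"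
proof -
  assume f: "recfn n f"
  hence "recfn n (\<lambda>xs. (fst (prod_decode (f xs)) + snd (prod_decode (f xs))) - fst (prod_decode (f xs)))"
    by (intro recfn_sub recfn_fst pdec_sum)
  thus ?thesis by simp
qed



fun fprim :: "nat option \<Rightarrow> (nat \<Rightarrow> nat \<Rightarrow> nat option) \<Rightarrow> nat \<Rightarrow> nat option" where
  "fprim b s 0 = b"
| "fprim b s (Suc k) = (case fprim b s k of None \<Rightarrow> None | Some r \<Rightarrow> s r k)"

fun mst :: "(nat \<Rightarrow> nat option) \<Rightarrow> nat \<Rightarrow> nat" where
  "mst \<phi> 0 = 1"
| "mst \<phi> (Suc m) = (if mst \<phi> m = 1 then (case \<phi> m of None \<Rightarrow> 0 | Some 0 \<Rightarrow> m + 2 | Some (Suc _) \<Rightarrow> 1)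
                     else mst \<phi> m)"

definition fmin :: "(nat \<Rightarrow> nat option) \<Rightarrow> nat \<Rightarrow> nat option" where
  "fmin \<phi> t = (if 2 \<le> mst \<phi> t then Some (mst \<phi> t - 2) else None)"

primrec feval :: "recf \<Rightarrow> nat \<Rightarrow> nat list \<Rightarrow> nat option" where
  "feval RZero = (\<lambda>t xs. Some 0)"
| "feval RSuc = (\<lambda>t xs. case xs of [] \<Rightarrow> None | x # _ \<Rightarrow> Some (Suc x))"
| "feval (RProj i) = (\<lambda>t xs. if i < length xs then Some (xs ! i) else None)"
| "feval (RComp f gs) = (\<lambda>t xs. let rs = map (\<lambda>h. h t xs) (map feval gs) in
      if None \<in> set rs then None else feval f t (map the rs))"
| "feval (RPrim f g) = (\<lambda>t xs. case xs of [] \<Rightarrow> None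
      | n # ys \<Rightarrow> fprim (feval f t ys) (\<lambda>r k. feval g t (r # k # ys)) n)"
| "feval (RMin f) = (\<lambda>t xs. fmin (\<lambda>m. feval f t (m # xs)) t)"

lemma mst1: "mst \<phi> m = 1 \<longleftrightarrow> (\<forall>k<m. \<exists>y. \<phi> k = Some (Suc y))"
proof (induction m)
  case 0 show ?case by simp
next
  case (Suc m)
  show ?case
  proof (cases "mst \<phi> m = 1")
    case True
    then show ?thesis using Suc by (auto split: option.splits nat.splits simp: less_Suc_eq)
  next
    case False
    then show ?thesis using Suc by (auto simp: less_Suc_eq)
  qed
qed

lemma mst2: "mst \<phi> m = j + 2 \<Longrightarrow> j < m \<and> \<phi> j = Some 0 \<and> (\<forall>k<j. \<exists>y. \<phi> k = Some (Suc y))"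
proof (induction m)
  case 0 thus ?case by simp
next
  case (Suc m)
  show ?case
  proof (cases "mst \<phi> m = 1")
    case True
    with Suc.prems have "\<phi> m = Some 0 \<and> j = m"
      by (auto split: option.splits nat.splits if_splits)
    thus ?thesis using True mst1 by auto
  next
    case False
    thus ?thesis using Suc by auto
  qed
qed

lemma mst3: "(\<forall>k<j. \<exists>y. \<phi> k = Some (Suc y)) \<Longrightarrow> \<phi> j = Some 0 \<Longrightarrow> j < m \<Longrightarrow> mst \<phi> m = j + 2"
proof (induction m)
  case 0 thus ?case by simp
next
  case (Suc m)
  show ?case
  proof (cases "j < m")
    case True thus ?thesis using Suc by auto
  next
    case False
    hence "j = m" using Suc by auto
    thus ?thesis using Suc mst1[of \<phi> m] by auto
  qed
qed

lemma feval_sound: "feval F t xs = Some y \<Longrightarrow> reval F xs y"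
proof (induction F arbitrary: t xs y)
  case RZero thus ?case by (auto intro: reval.zero)
next
  case RSuc thus ?case by (auto split: list.splits intro: reval.suc)
next
  case (RProj i) thus ?case by (auto split: if_splits intro: reval.proj)
next
  case (RComp f gs)
  let ?rs = "map (\<lambda>g. feval g t xs) gs"
  have N: "None \<notin> set ?rs" and F: "feval f t (map the ?rs) = Some y"
    using RComp.prems by (auto simp: Let_def comp_def split: if_splits)
  show ?case
  proof (rule reval.comp[where ys="map the ?rs"])
    show "\<forall>i<length gs. reval (gs ! i) xs (map the ?rs ! i)"
    proof (intro allI impI)
      fix i assume i: "i < length gs"
      hence "?rs ! i \<noteq> None" using N by (metis length_map nth_mem)
      hence "feval (gs ! i) t xs = Some (map the ?rs ! i)" using i by auto
      thus "reval (gs ! i) xs (map the ?rs ! i)" using RComp.IH(2)[OF nth_mem[OF i]] by blast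
    qed
    show "reval f (map the ?rs) y" using RComp.IH(1) F by blast
  qed simp
next
  case (RPrim f g)
  then obtain n ys where xs: "xs = n # ys" by (cases xs) auto
  have "fprim (feval f t ys) (\<lambda>r k. feval g t (r # k # ys)) n = Some y \<Longrightarrow> reval (RPrim f g) (n # ys) y" for y
  proof (induction n arbitrary: y)
    case 0 thus ?case using RPrim.IH(1) by (auto intro: reval.prim0)
  next
    case (Suc n)
    then obtain r where "fprim (feval f t ys) (\<lambda>r k. feval g t (r # k # ys)) n = Some r"
      "feval g t (r # n # ys) = Some y" by (auto split: option.splits)
    thus ?case using Suc.IH RPrim.IH(2) by (auto intro: reval.primS)
  qed
  thus ?case using RPrim.prems xs by simp
next
  case (RMin f)
  let ?\<phi> = "\<lambda>m. feval f t (m # xs)"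
  have "mst ?\<phi> t = y + 2" using RMin.prems by (auto simp: fmin_def split: if_splits)
  from mst2[OF this] have A: "?\<phi> y = Some 0" "\<forall>k<y. \<exists>z. ?\<phi> k = Some (Suc z)" by auto
  show ?case
  proof (rule reval.mini)
    show "reval f (y # xs) 0" using A RMin.IH by blast
    show "\<forall>m<y. \<exists>z. reval f (m # xs) (Suc z)" using A RMin.IH by blast
  qed
qed

lemma feval_mono: "feval F t xs = Some y \<Longrightarrow> t \<le> t' \<Longrightarrow> feval F t' xs = Some y"
proof (induction F arbitrary: t xs y)
  case RZero thus ?case by simp
next
  case RSuc thus ?case by simp
next
  case (RProj i) thus ?case by simp
next
  case (RComp f gs)
  let ?rs = "map (\<lambda>g. feval g t xs) gs"
  have N: "None \<notin> set ?rs" and F: "feval f t (map the ?rs) = Some y"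
    using RComp.prems by (auto simp: Let_def comp_def split: if_splits)
  have E: "map (\<lambda>g. feval g t' xs) gs = ?rs"
  proof (rule map_cong[OF refl])
    fix g assume g: "g \<in> set gs"
    have "feval g t xs \<noteq> None" using N g by (metis (mono_tags, lifting) image_eqI set_map)
    then obtain z where "feval g t xs = Some z" by auto
    thus "feval g t' xs = feval g t xs" using RComp.IH(2)[OF g] RComp.prems(2) by auto
  qed
  have "feval (RComp f gs) t' xs = (let rs = map (\<lambda>g. feval g t' xs) gs in
          if None \<in> set rs then None else feval f t' (map the rs))" by (simp add: comp_def)
  also have "\<dots> = (if None \<in> set ?rs then None else feval f t' (map the ?rs))"
    unfolding E Let_def ..
  finally show ?case using N RComp.IH(1)[OF F RComp.prems(2)] by simp
next
  case (RPrim f g)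
  then obtain n ys where xs: "xs = n # ys" by (cases xs) auto
  have "fprim (feval f t ys) (\<lambda>r k. feval g t (r # k # ys)) n = Some y \<Longrightarrow>
        fprim (feval f t' ys) (\<lambda>r k. feval g t' (r # k # ys)) n = Some y" for y
  proof (induction n arbitrary: y)
    case 0 thus ?case using RPrim.IH(1) RPrim.prems(2) by auto
  next
    case (Suc n)
    then obtain r where "fprim (feval f t ys) (\<lambda>r k. feval g t (r # k # ys)) n = Some r"
      "feval g t (r # n # ys) = Some y" by (auto split: option.splits)
    thus ?case using Suc.IH RPrim.IH(2) RPrim.prems(2) by auto
  qed
  thus ?case using RPrim.prems xs by simp
next
  case (RMin f)
  let ?\<phi> = "\<lambda>m. feval f t (m # xs)"
  let ?\<psi> = "\<lambda>m. feval f t' (m # xs)"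
  have "mst ?\<phi> t = y + 2" using RMin.prems by (auto simp: fmin_def split: if_splits)
  from mst2[OF this] have A: "y < t" "?\<phi> y = Some 0" "\<forall>k<y. \<exists>z. ?\<phi> k = Some (Suc z)" by auto
  have "?\<psi> y = Some 0" using A(2) RMin.IH RMin.prems(2) by blast
  moreover have "\<forall>k<y. \<exists>z. ?\<psi> k = Some (Suc z)" using A(3) RMin.IH RMin.prems(2) by blast
  ultimately have "mst ?\<psi> t' = y + 2" using mst3[of y ?\<psi> t'] A(1) RMin.prems(2) by auto
  thus ?case by (simp add: fmin_def)
qed

lemma common_fuel:
  assumes "\<forall>i<n. \<exists>t. P i t"
  shows "\<exists>tf. \<forall>i<n. P i (tf i)"
  using assms by metis

lemma le_sum_nat: "i < (n::nat) \<Longrightarrow> (tf i :: nat) \<le> (\<Sum>j<n. tf j)"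
  using member_le_sum[of i "{..<n}" tf] by simp

lemma feval_complete: "reval F xs y \<Longrightarrow> \<exists>t. feval F t xs = Some y"
proof (induction rule: reval.induct)
  case (zero xs) thus ?case by simp
next
  case (suc x xs) thus ?case by simp
next
  case (proj i xs) thus ?case by simp
next
  case (comp ys gs xs f z)
  have H: "\<forall>i<length gs. \<exists>t. feval (gs ! i) t xs = Some (ys ! i)" using comp.IH(1) by blast
  obtain tf where tf: "\<forall>i<length gs. feval (gs ! i) (tf i) xs = Some (ys ! i)"
    using common_fuel[OF H] by blast
  obtain t0 where t0: "feval f t0 ys = Some z" using comp.IH(2) by blast
  let ?T = "t0 + (\<Sum>j<length gs. tf j)"
  have E: "map (\<lambda>g. feval g ?T xs) gs = map Some ys"
  proof (rule nth_equalityI)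
    show "length (map (\<lambda>g. feval g ?T xs) gs) = length (map Some ys)" using comp.hyps(1) by simp
    fix i assume "i < length (map (\<lambda>g. feval g ?T xs) gs)"
    hence i: "i < length gs" by simp
    have "tf i \<le> ?T" using le_sum_nat[OF i, of tf] by linarith
    hence "feval (gs ! i) ?T xs = Some (ys ! i)" using feval_mono[of "gs ! i" "tf i" xs "ys ! i" ?T] tf i by blast
    thus "map (\<lambda>g. feval g ?T xs) gs ! i = map Some ys ! i"
      using i comp.hyps(1) by simp
  qed
  have "feval f ?T ys = Some z" using feval_mono[OF t0] by simp
  have "feval (RComp f gs) ?T xs = (let rs = map (\<lambda>g. feval g ?T xs) gs in
          if None \<in> set rs then None else feval f ?T (map the rs))" by (simp add: comp_def)
  also have "\<dots> = (if None \<in> set (map Some ys) then None else feval f ?T (map the (map Some ys)))"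
    unfolding E Let_def ..
  finally have "feval (RComp f gs) ?T xs = Some z" using \<open>feval f ?T ys = Some z\<close> by (simp add: comp_def)
  thus ?case by blast
next
  case (prim0 f xs y g)
  then obtain t where "feval f t xs = Some y" by blast
  hence "feval (RPrim f g) t (0 # xs) = Some y" by simp
  thus ?case by blast
next
  case (primS f g n xs y z)
  obtain t1 where t1: "feval (RPrim f g) t1 (n # xs) = Some y" using primS.IH(1) by blast
  obtain t2 where t2: "feval g t2 (y # n # xs) = Some z" using primS.IH(2) by blast
  have "feval (RPrim f g) (t1 + t2) (n # xs) = Some y" using feval_mono[OF t1] by simp
  moreover have "feval g (t1 + t2) (y # n # xs) = Some z" using feval_mono[OF t2] by simp
  ultimately have "feval (RPrim f g) (t1 + t2) (Suc n # xs) = Some z" by simp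
  thus ?case by blast
next
  case (mini f n xs)
  obtain t0 where t0: "feval f t0 (n # xs) = Some 0" using mini.IH(1) by blast
  have "\<forall>m<n. \<exists>t y. feval f t (m # xs) = Some (Suc y)" using mini.IH(2) by metis
  then obtain tf yf where tf: "\<forall>m<n. feval f (tf m) (m # xs) = Some (Suc (yf m))" by metis
  let ?T = "Suc n + t0 + (\<Sum>j<n. tf j)"
  let ?\<phi> = "\<lambda>m. feval f ?T (m # xs)"
  have A: "\<forall>k<n. \<exists>y. ?\<phi> k = Some (Suc y)"
  proof (intro allI impI)
    fix k assume k: "k < n"
    have "tf k \<le> ?T" using le_sum_nat[OF k, of tf] by linarith
    thus "\<exists>y. ?\<phi> k = Some (Suc y)" using feval_mono[of f "tf k" "k # xs" "Suc (yf k)" ?T] tf k by blast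
  qed
  have B: "?\<phi> n = Some 0" using feval_mono[OF t0] by simp
  have "mst ?\<phi> ?T = n + 2" by (rule mst3[OF A B]) simp
  hence "feval (RMin f) ?T xs = Some n" by (simp add: fmin_def)
  thus ?case by blast
qed



fun enc :: "nat option \<Rightarrow> nat" where
  "enc None = 0"
| "enc (Some y) = Suc y"

lemma recfn_prodlist:
  "\<forall>g\<in>set gs. recfn n (h g) \<Longrightarrow> recfn n (\<lambda>ys. prod_list (map (\<lambda>g. h g ys) gs))"
proof (induction gs)
  case Nil thus ?case by (simp add: recfn_const)
next
  case (Cons g gs) thus ?case by (simp add: recfn_mult)
qed

lemma recfn_pred': "recfn n f \<Longrightarrow> recfn n (\<lambda>xs. f xs - Suc 0)"
  using recfn_pred by simp

lemma enc_zero: "enc x = 0 \<longleftrightarrow> x = None"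
  by (cases x) auto

lemma trans_RComp:
  assumes IHf: "\<And>n. recfn (Suc n) (\<lambda>ys. enc (feval f (hd ys) (tl ys)))"
    and IHg: "\<And>g n. g \<in> set gs \<Longrightarrow> recfn (Suc n) (\<lambda>ys. enc (feval g (hd ys) (tl ys)))"
  shows "recfn (Suc n) (\<lambda>ys. enc (feval (RComp f gs) (hd ys) (tl ys)))"
proof -
  define Gf where "Gf g ys = enc (feval g (hd ys) (tl ys))" for g ys
  define Ff where "Ff ys = enc (feval f (hd ys) (tl ys))" for ys
  have G: "\<forall>g\<in>set gs. recfn (Suc n) (Gf g)" using IHg unfolding Gf_def by blast
  have P: "recfn (Suc n) (\<lambda>ys. prod_list (map (\<lambda>g. Gf g ys) gs))"
    by (rule recfn_prodlist[OF G])
  have "recfn (length (hd # map (\<lambda>g ys. Gf g ys - 1) gs)) Ff" using IHf unfolding Ff_def by simp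
  hence C: "recfn (Suc n) (\<lambda>ys. Ff (map (\<lambda>\<phi>. \<phi> ys) (hd # map (\<lambda>g ys. Gf g ys - 1) gs)))"
    by (rule recfn_comp) (use G in \<open>auto intro: recfn_hd recfn_pred'\<close>)
  have "recfn (Suc n) (\<lambda>ys. if prod_list (map (\<lambda>g. Gf g ys) gs) = 0 then 0
                          else Ff (map (\<lambda>\<phi>. \<phi> ys) (hd # map (\<lambda>g ys. Gf g ys - 1) gs)))"
    by (intro recfn_if recpred_eq P recfn_const C)
  thus ?thesis
  proof (rule recfn_cong)
    fix ys :: "nat list"
    let ?t = "hd ys" and ?xs = "tl ys"
    let ?rs = "map (\<lambda>g. feval g ?t ?xs) gs"
    have Z: "prod_list (map (\<lambda>g. Gf g ys) gs) = 0 \<longleftrightarrow> None \<in> set ?rs"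
      by (auto simp: prod_list_zero_iff Gf_def enc_zero image_iff) (metis enc.simps(1), metis)
    have M: "map the ?rs = map (\<lambda>g. Gf g ys - 1) gs" if "None \<notin> set ?rs"
    proof (rule map_cong[OF refl, THEN trans[OF map_map]])
      fix g assume "g \<in> set gs"
      hence "feval g ?t ?xs \<noteq> None" using that by (metis (mono_tags, lifting) image_eqI set_map)
      thus "(the \<circ> (\<lambda>g. feval g ?t ?xs)) g = Gf g ys - 1" by (auto simp: Gf_def)
    qed
    have F: "feval (RComp f gs) ?t ?xs = (if None \<in> set ?rs then None else feval f ?t (map the ?rs))"
      by (simp add: comp_def Let_def)
    show "(if prod_list (map (\<lambda>g. Gf g ys) gs) = 0 then 0
           else Ff (map (\<lambda>\<phi>. \<phi> ys) (hd # map (\<lambda>g ys. Gf g ys - 1) gs))) =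
          enc (feval (RComp f gs) ?t ?xs)"
    proof (cases "None \<in> set ?rs")
      case True thus ?thesis unfolding F Z by simp
    next
      case False
      have "Ff (map (\<lambda>\<phi>. \<phi> ys) (hd # map (\<lambda>g ys. Gf g ys - 1) gs)) =
            enc (feval f ?t (map (\<lambda>g. Gf g ys - 1) gs))" by (simp add: Ff_def comp_def)
      also have "\<dots> = enc (feval f ?t (map the ?rs))" by (simp only: M[OF False])
      finally show ?thesis unfolding F Z using False by simp
    qed
  qed
qed


lemma len_Suc_cases: "length ys = Suc n \<Longrightarrow> ys = hd ys # tl ys \<and> length (tl ys) = n"
  by (cases ys) auto

lemma trans_RPrim:
  assumes IHf: "\<And>n. recfn (Suc n) (\<lambda>ys. enc (feval f (hd ys) (tl ys)))"
    and IHg: "\<And>n. recfn (Suc n) (\<lambda>ys. enc (feval g (hd ys) (tl ys)))"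
  shows "recfn (Suc n) (\<lambda>ys. enc (feval (RPrim f g) (hd ys) (tl ys)))"
proof (cases n)
  case 0
  show ?thesis
    by (rule recfn_cong[OF recfn_const[of _ 0]]) (use 0 in \<open>auto simp: length_Suc_conv\<close>)
next
  case (Suc m)
  define Ff where "Ff ys = enc (feval f (hd ys) (tl ys))" for ys
  define Gf where "Gf ys = enc (feval g (hd ys) (tl ys))" for ys
  define Hs where "Hs zs = (if zs!0 = 0 then 0 else
      Gf (map (\<lambda>\<phi>. \<phi> zs) [\<lambda>zs. zs!2, \<lambda>zs. zs!0 - 1, \<lambda>zs. zs!1] @ drop 3 zs))" for zs
  have "recfn (length [\<lambda>zs. zs!2, \<lambda>zs. zs!0 - 1, \<lambda>zs. (zs::nat list)!1] + m) Gf"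
    using IHg unfolding Gf_def by (simp add: numeral_3_eq_3)
  hence "recfn (Suc (Suc (Suc m))) (\<lambda>zs. Gf (map (\<lambda>\<phi>. \<phi> zs) [\<lambda>zs. zs!2, \<lambda>zs. zs!0 - 1, \<lambda>zs. zs!1] @ drop 3 zs))"
    by (rule recfn_drop) (auto intro!: recfn_proj recfn_pred')
  hence H: "recfn (Suc (Suc (Suc m))) Hs" unfolding Hs_def
    by (intro recfn_if recpred_eq recfn_proj recfn_const) auto
  have FF: "recfn (Suc m) Ff" using IHf unfolding Ff_def by blast
  have P: "recfn (Suc (Suc m)) (\<lambda>zs. primh Ff Hs (hd zs) (tl zs))"
    by (rule recfn_prim[OF FF H])
  have "recfn (length [\<lambda>ys. ys!1, \<lambda>ys. (ys::nat list)!0] + m) (\<lambda>zs. primh Ff Hs (hd zs) (tl zs))"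
    using P by simp
  hence R: "recfn (Suc (Suc m)) (\<lambda>ys. (\<lambda>zs. primh Ff Hs (hd zs) (tl zs))
               (map (\<lambda>\<phi>. \<phi> ys) [\<lambda>ys. ys!1, \<lambda>ys. ys!0] @ drop 2 ys))"
    by (rule recfn_drop) (auto intro!: recfn_proj)
  have PH: "primh Ff Hs k (t # xs) = enc (fprim (feval f t xs) (\<lambda>r k. feval g t (r # k # xs)) k)" for k t xs
  proof (induction k)
    case 0 thus ?case by (simp add: Ff_def)
  next
    case (Suc k)
    show ?case
    proof (cases "fprim (feval f t xs) (\<lambda>r k. feval g t (r # k # xs)) k")
      case None thus ?thesis using Suc by (simp add: Hs_def)
    next
      case (Some r) thus ?thesis using Suc by (simp add: Hs_def Gf_def numeral_3_eq_3)
    qed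
  qed
  show ?thesis
  proof (rule recfn_cong[OF R[folded Suc]])
    fix ys :: "nat list" assume "length ys = Suc n"
    then obtain t k xs where ys: "ys = t # k # xs" using Suc by (auto simp: length_Suc_conv)
    show "(\<lambda>zs. primh Ff Hs (hd zs) (tl zs)) (map (\<lambda>\<phi>. \<phi> ys) [\<lambda>ys. ys!1, \<lambda>ys. ys!0] @ drop 2 ys) =
          enc (feval (RPrim f g) (hd ys) (tl ys))"
      using PH by (simp add: ys)
  qed
qed

lemma trans_RMin:
  assumes IHf: "\<And>n. recfn (Suc n) (\<lambda>ys. enc (feval f (hd ys) (tl ys)))"
  shows "recfn (Suc n) (\<lambda>ys. enc (feval (RMin f) (hd ys) (tl ys)))"
proof -
  define Ff where "Ff ys = enc (feval f (hd ys) (tl ys))" for ys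
  define V where "V zs = Ff (map (\<lambda>\<phi>. \<phi> zs) [\<lambda>zs. zs!2, \<lambda>zs. zs!1] @ drop 3 zs)" for zs
  define Hs where "Hs zs = (if zs!0 = 1 then (if V zs = 0 then 0 else if V zs = 1 then zs!1 + 2 else 1)
                            else zs!0)" for zs
  have "recfn (length [\<lambda>zs. zs!2, \<lambda>zs. (zs::nat list)!1] + n) Ff"
    using IHf unfolding Ff_def by simp
  hence "recfn (Suc (Suc (Suc n))) V" unfolding V_def
    by (rule recfn_drop) (auto intro!: recfn_proj)
  hence H: "recfn (Suc (Suc (Suc n))) Hs" unfolding Hs_def
    by (intro recfn_if recpred_eq recfn_proj recfn_const recfn_add) auto
  have P: "recfn (Suc (Suc n)) (\<lambda>zs. primh (\<lambda>_. 1) Hs (hd zs) (tl zs))"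
    by (rule recfn_prim[OF recfn_const H])
  have "recfn (length [\<lambda>ys. (ys::nat list)!0] + Suc n) (\<lambda>zs. primh (\<lambda>_. 1) Hs (hd zs) (tl zs))"
    using P by simp
  hence S: "recfn (Suc n) (\<lambda>ys. (\<lambda>zs. primh (\<lambda>_. 1) Hs (hd zs) (tl zs))
               (map (\<lambda>\<phi>. \<phi> ys) [\<lambda>ys. ys!0] @ drop 0 ys))"
    by (rule recfn_drop) (auto intro!: recfn_proj)
  define SS where "SS ys = (\<lambda>zs. primh (\<lambda>_. 1) Hs (hd zs) (tl zs)) (map (\<lambda>\<phi>. \<phi> ys) [\<lambda>ys. ys!0] @ drop 0 ys)" for ys
  have S': "recfn (Suc n) SS" using S unfolding SS_def .
  have R: "recfn (Suc n) (\<lambda>ys. if 1 < SS ys then SS ys - 1 else 0)"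
    by (intro recfn_if recpred_less recfn_const S' recfn_pred)
  have PH: "primh (\<lambda>_. 1) Hs m (t # xs) = mst (\<lambda>m. feval f t (m # xs)) m" for m t xs
  proof (induction m)
    case 0 thus ?case by simp
  next
    case (Suc m)
    have V: "V (mst (\<lambda>m. feval f t (m # xs)) m # m # t # xs) = enc (feval f t (m # xs))"
      by (simp add: V_def Ff_def numeral_3_eq_3)
    show ?case using Suc V
      by (auto simp: Hs_def split: option.splits nat.splits)
  qed
  show ?thesis
  proof (rule recfn_cong[OF R])
    fix ys :: "nat list" assume "length ys = Suc n"
    then obtain t xs where ys: "ys = t # xs" by (auto simp: length_Suc_conv)
    have "SS ys = mst (\<lambda>m. feval f t (m # xs)) t" using PH by (simp add: SS_def ys)
    thus "(if 1 < SS ys then SS ys - 1 else 0) = enc (feval (RMin f) (hd ys) (tl ys))"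
      by (auto simp: ys fmin_def)
  qed
qed

lemma trans_all: "recfn (Suc n) (\<lambda>ys. enc (feval F (hd ys) (tl ys)))"
proof (induction F arbitrary: n)
  case RZero
  show ?case by (rule recfn_cong[OF recfn_const[of _ 1]]) simp
next
  case RSuc
  show ?case
  proof (cases n)
    case 0 thus ?thesis
      by (intro recfn_cong[OF recfn_const[of _ 0]]) (auto simp: length_Suc_conv)
  next
    case (Suc m)
    have "recfn (Suc n) (\<lambda>ys. Suc (Suc (ys!1)))" using Suc by (intro recfn_Suc recfn_proj) simp
    thus ?thesis by (rule recfn_cong) (use Suc in \<open>auto simp: length_Suc_conv\<close>)
  qed
next
  case (RProj i)
  show ?case
  proof (cases "i < n")
    case True
    have "recfn (Suc n) (\<lambda>ys. Suc (ys!(Suc i)))" using True by (intro recfn_Suc recfn_proj) simp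
    thus ?thesis by (rule recfn_cong) (use True in \<open>auto simp: length_Suc_conv\<close>)
  next
    case False
    thus ?thesis
      by (intro recfn_cong[OF recfn_const[of _ 0]]) (auto simp: length_Suc_conv)
  qed
next
  case (RComp f gs) thus ?case by (intro trans_RComp) auto
next
  case (RPrim f g) thus ?case by (intro trans_RPrim) auto
next
  case (RMin f) thus ?case by (intro trans_RMin) auto
qed



abbreviation pd :: "nat \<Rightarrow> nat \<times> nat" where "pd \<equiv> prod_decode"
abbreviation pe :: "nat \<Rightarrow> nat \<Rightarrow> nat" where "pe a b \<equiv> prod_encode (a, b)"

definition ival :: "nat \<Rightarrow> int" where
  "ival c = int (fst (pd c)) - int (snd (pd c))"
definition imul :: "nat \<Rightarrow> nat \<Rightarrow> nat" where
  "imul a b = pe (fst (pd a) * fst (pd b) + snd (pd a) * snd (pd b))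
                 (fst (pd a) * snd (pd b) + snd (pd a) * fst (pd b))"
definition iadd :: "nat \<Rightarrow> nat \<Rightarrow> nat" where
  "iadd a b = pe (fst (pd a) + fst (pd b)) (snd (pd a) + snd (pd b))"
definition fromenc :: "nat \<Rightarrow> nat" where
  "fromenc k = (if k mod 2 = 0 then pe (k div 2) 0 else pe 0 (k div 2 + 1))"

lemma ival_imul: "ival (imul a b) = ival a * ival b"
  by (simp add: ival_def imul_def algebra_simps)

lemma ival_iadd: "ival (iadd a b) = ival a + ival b"
  by (simp add: ival_def iadd_def algebra_simps)

lemma ival_fromenc: "ival (fromenc k) = int_decode k"
  by (auto simp: ival_def fromenc_def int_decode_def sum_decode_def)

definition rval :: "nat \<Rightarrow> rat" where
  "rval v = of_int (ival (fst (pd v))) / of_int (ival (snd (pd v)))"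
definition dok :: "nat \<Rightarrow> bool" where
  "dok v \<longleftrightarrow> ival (snd (pd v)) \<noteq> 0"
definition radd :: "nat \<Rightarrow> nat \<Rightarrow> nat" where
  "radd v w = pe (iadd (imul (fst (pd v)) (snd (pd w))) (imul (fst (pd w)) (snd (pd v))))
                 (imul (snd (pd v)) (snd (pd w)))"
definition rmul :: "nat \<Rightarrow> nat \<Rightarrow> nat" where
  "rmul v w = pe (imul (fst (pd v)) (fst (pd w))) (imul (snd (pd v)) (snd (pd w)))"
definition rconst :: "nat \<Rightarrow> nat" where
  "rconst k = pe (fromenc k) (pe 1 0)"

lemma radd_ok: "dok v \<Longrightarrow> dok w \<Longrightarrow> dok (radd v w) \<and> rval (radd v w) = rval v + rval w"
  by (simp add: dok_def rval_def radd_def ival_iadd ival_imul field_simps)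

lemma rmul_ok: "dok v \<Longrightarrow> dok w \<Longrightarrow> dok (rmul v w) \<and> rval (rmul v w) = rval v * rval w"
  by (simp add: dok_def rval_def rmul_def ival_imul field_simps)

lemma rconst_ok: "dok (rconst k) \<and> rval (rconst k) = of_int (int_decode k)"
  by (simp add: dok_def rval_def rconst_def ival_fromenc) (simp add: ival_def)

lemma rval_zero: "dok v \<Longrightarrow> rval v = 0 \<longleftrightarrow> fst (pd (fst (pd v))) = snd (pd (fst (pd v)))"
  by (auto simp: dok_def rval_def ival_def)

lemma recfn_imul: "recfn n f \<Longrightarrow> recfn n g \<Longrightarrow> recfn n (\<lambda>xs. imul (f xs) (g xs))"
  unfolding imul_def by (intro recfn_pe recfn_add recfn_mult recfn_fst recfn_snd)
lemma recfn_iadd: "recfn n f \<Longrightarrow> recfn n g \<Longrightarrow> recfn n (\<lambda>xs. iadd (f xs) (g xs))"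
  unfolding iadd_def by (intro recfn_pe recfn_add recfn_mult recfn_fst recfn_snd)
lemma recfn_fromenc: "recfn n f \<Longrightarrow> recfn n (\<lambda>xs. fromenc (f xs))"
  unfolding fromenc_def by (intro recfn_if recpred_eq recfn_pe recfn_add recfn_mod recfn_div recfn_const) auto
lemma recfn_radd: "recfn n f \<Longrightarrow> recfn n g \<Longrightarrow> recfn n (\<lambda>xs. radd (f xs) (g xs))"
  unfolding radd_def by (intro recfn_pe recfn_iadd recfn_imul recfn_fst recfn_snd)
lemma recfn_rmul: "recfn n f \<Longrightarrow> recfn n g \<Longrightarrow> recfn n (\<lambda>xs. rmul (f xs) (g xs))"
  unfolding rmul_def by (intro recfn_pe recfn_iadd recfn_imul recfn_fst recfn_snd)
lemma recfn_rconst: "recfn n f \<Longrightarrow> recfn n (\<lambda>xs. rconst (f xs))"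
  unfolding rconst_def by (intro recfn_pe recfn_fromenc recfn_const)

lemma primh_iter: "primh (\<lambda>ys. ys!0) (\<lambda>ys. h (ys!0)) k [x] = (h ^^ k) x"
  by (induction k) auto

lemma recfn_iter:
  assumes h: "recfn 1 (\<lambda>ys. h (ys!0))" and "recfn n fk" "recfn n fx"
  shows "recfn n (\<lambda>xs. (h ^^ fk xs) (fx xs))"
proof -
  have "recfn (Suc (Suc 0)) (\<lambda>zs. primh (\<lambda>ys. ys!0) (\<lambda>ys. h (ys!0)) (hd zs) (tl zs))"
    by (rule recfn_prim) (auto intro!: recfn_proj recfn_comp1[OF h, of _ "\<lambda>ys. ys!0", simplified])
  hence "recfn 2 (\<lambda>zs. (h ^^ (zs!0)) (zs!1))"
    unfolding numeral_2_eq_2 by (rule recfn_cong) (auto simp: length_Suc_conv primh_iter)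
  from recfn_comp2[OF this assms(2,3)] show ?thesis by simp
qed


definition seq :: "nat \<Rightarrow> nat \<Rightarrow> nat" where
  "seq t i = fst (pd (((\<lambda>x. snd (pd x)) ^^ i) t))"

fun tenc :: "nat list \<Rightarrow> nat" where
  "tenc [] = 0"
| "tenc (k # ks) = pe k (tenc ks)"

lemma seq_tenc: "i < length ks \<Longrightarrow> seq (tenc ks) i = ks ! i"
proof (induction ks arbitrary: i)
  case Nil thus ?case by simp
next
  case (Cons k ks)
  show ?case
  proof (cases i)
    case 0 thus ?thesis by (simp add: seq_def)
  next
    case (Suc j)
    have "seq (tenc (k # ks)) i = seq (tenc ks) j" unfolding seq_def Suc funpow_Suc_right comp_def by simp
    thus ?thesis using Cons Suc by simp
  qed
qed

lemma recfn_snd1: "recfn 1 (\<lambda>ys. snd (pd (ys!0)))"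
  by (intro recfn_snd recfn_proj) simp

lemma recfn_seq: "recfn n f \<Longrightarrow> recfn n g \<Longrightarrow> recfn n (\<lambda>xs. seq (f xs) (g xs))"
  unfolding seq_def by (intro recfn_fst recfn_iter[OF recfn_snd1])

definition lcons :: "nat \<Rightarrow> nat \<Rightarrow> nat" where "lcons a l = Suc (pe a l)"
definition ltl :: "nat \<Rightarrow> nat" where "ltl l = snd (pd (l - 1))"
definition lookup :: "nat \<Rightarrow> nat \<Rightarrow> nat" where "lookup l k = fst (pd ((ltl ^^ k) l - 1))"

lemma lookup_cons0: "lookup (lcons a l) 0 = a"
  by (simp add: lookup_def lcons_def)
lemma lookup_consS: "lookup (lcons a l) (Suc k) = lookup l k"
  unfolding lookup_def funpow_Suc_right comp_def by (simp add: lcons_def ltl_def)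

lemma recfn_ltl1: "recfn 1 (\<lambda>ys. ltl (ys!0))"
  unfolding ltl_def by (intro recfn_snd recfn_pred recfn_proj) simp

lemma recfn_lookup: "recfn n f \<Longrightarrow> recfn n g \<Longrightarrow> recfn n (\<lambda>xs. lookup (f xs) (g xs))"
  unfolding lookup_def by (intro recfn_fst recfn_pred recfn_iter[OF recfn_ltl1])

lemma recfn_lcons: "recfn n f \<Longrightarrow> recfn n g \<Longrightarrow> recfn n (\<lambda>xs. lcons (f xs) (g xs))"
  unfolding lcons_def by (intro recfn_Suc recfn_pe)

definition evstep :: "(nat \<Rightarrow> nat) \<Rightarrow> nat \<Rightarrow> nat \<Rightarrow> nat" where
  "evstep A m T = (if m mod 4 = 0 then A (m div 4)
     else if m mod 4 = 1 then rconst (m div 4)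
     else if m mod 4 = 2 then radd (lookup T (m - 1 - fst (pd (m div 4)))) (lookup T (m - 1 - snd (pd (m div 4))))
     else rmul (lookup T (m - 1 - fst (pd (m div 4)))) (lookup T (m - 1 - snd (pd (m div 4)))))"

fun tab :: "(nat \<Rightarrow> nat) \<Rightarrow> nat \<Rightarrow> nat" where
  "tab A 0 = 0"
| "tab A (Suc m) = lcons (evstep A m (tab A m)) (tab A m)"

definition ev :: "(nat \<Rightarrow> nat) \<Rightarrow> nat \<Rightarrow> nat" where
  "ev A m = evstep A m (tab A m)"

lemma lookup_tab: "j < m \<Longrightarrow> lookup (tab A m) (m - 1 - j) = ev A j"
proof (induction m)
  case 0 thus ?case by simp
next
  case (Suc m)
  show ?case
  proof (cases "j = m")
    case True thus ?thesis by (simp add: lookup_cons0 ev_def)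
  next
    case False
    hence "j < m" using Suc by simp
    hence "Suc m - 1 - j = Suc (m - 1 - j)" by simp
    thus ?thesis using Suc.IH \<open>j < m\<close> by (simp add: lookup_consS)
  qed
qed

fun valc :: "(nat \<Rightarrow> nat) \<Rightarrow> dpoly \<Rightarrow> nat" where
  "valc A (PVar i) = A i"
| "valc A (PConst c) = rconst (int_encode c)"
| "valc A (PAdd p q) = radd (valc A p) (valc A q)"
| "valc A (PMul p q) = rmul (valc A p) (valc A q)"

lemma ev_pcode: "ev A (pcode D) = valc A D"
proof (induction D)
  case (PVar i) thus ?case by (simp add: ev_def evstep_def)
next
  case (PConst c)
  have "Suc (4 * int_encode c) div 4 = int_encode c" by presburger
  thus ?case by (simp add: ev_def evstep_def)
next
  case (PAdd p q)
  let ?m = "4 * pe (pcode p) (pcode q) + 2"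
  have lp: "pcode p < ?m" using le_prod_encode_1[of "pcode p" "pcode q"] by linarith
  have lq: "pcode q < ?m" using le_prod_encode_2[of "pcode q" "pcode p"] by linarith
  have m4: "?m mod 4 = 2" "?m div 4 = pe (pcode p) (pcode q)" by presburger+
  have "ev A ?m = radd (ev A (pcode p)) (ev A (pcode q))"
    unfolding ev_def[of A ?m] evstep_def m4 prod_encode_inverse fst_conv snd_conv
      lookup_tab[OF lp, of A] lookup_tab[OF lq, of A]
    by simp
  thus ?case using PAdd by simp
next
  case (PMul p q)
  let ?m = "4 * pe (pcode p) (pcode q) + 3"
  have lp: "pcode p < ?m" using le_prod_encode_1[of "pcode p" "pcode q"] by linarith
  have lq: "pcode q < ?m" using le_prod_encode_2[of "pcode q" "pcode p"] by linarith
  have m4: "?m mod 4 = 3" "?m div 4 = pe (pcode p) (pcode q)" by presburger+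
  have "ev A ?m = rmul (ev A (pcode p)) (ev A (pcode q))"
    unfolding ev_def[of A ?m] evstep_def m4 prod_encode_inverse fst_conv snd_conv
      lookup_tab[OF lp, of A] lookup_tab[OF lq, of A]
    by simp
  thus ?case using PMul by simp
qed

lemma valc_ok: "(\<forall>i. dok (A i)) \<Longrightarrow> dok (valc A D) \<and> rval (valc A D) = peval (\<lambda>i. rval (A i)) D"
  by (induction D) (auto simp: radd_ok rmul_ok rconst_ok)



definition asg :: "(nat \<Rightarrow> int) \<Rightarrow> (nat \<Rightarrow> int) \<Rightarrow> nat \<Rightarrow> nat \<Rightarrow> nat" where
  "asg \<tau>1 \<tau>2 t i = pe (fromenc (int_encode (\<tau>1 (seq t i)))) (fromenc (int_encode (\<tau>2 (seq t i))))"

lemma recfn_tau: "computable_int_fun \<tau> \<Longrightarrow> recfn n f \<Longrightarrow> recfn n (\<lambda>xs. int_encode (\<tau> (f xs)))"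
proof -
  assume "computable_int_fun \<tau>" "recfn n f"
  then obtain F where F: "\<forall>k. reval F [k] (int_encode (\<tau> k))" unfolding computable_int_fun_def by blast
  have "recfn 1 (\<lambda>ys. int_encode (\<tau> (ys!0)))" unfolding recfn_def rc_def
    by (metis F len1)
  from recfn_comp1[OF this \<open>recfn n f\<close>] show ?thesis by simp
qed

context
  fixes \<tau>1 \<tau>2 :: "nat \<Rightarrow> int"
  assumes c1: "computable_int_fun \<tau>1" and c2: "computable_int_fun \<tau>2"
begin

lemma recfn_asg: "recfn n f \<Longrightarrow> recfn n g \<Longrightarrow> recfn n (\<lambda>xs. asg \<tau>1 \<tau>2 (f xs) (g xs))"
  unfolding asg_def by (intro recfn_pe recfn_fromenc recfn_tau[OF c1] recfn_tau[OF c2] recfn_seq)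

lemma recfn_evstep: "recfn n ft \<Longrightarrow> recfn n fm \<Longrightarrow> recfn n fT \<Longrightarrow>
    recfn n (\<lambda>xs. evstep (asg \<tau>1 \<tau>2 (ft xs)) (fm xs) (fT xs))"
  unfolding evstep_def
  by (intro recfn_if recpred_eq recfn_mod recfn_div recfn_const recfn_asg recfn_rconst recfn_radd recfn_rmul
        recfn_lookup recfn_sub recfn_pred recfn_fst recfn_snd) auto

lemma primh_tab: "primh (\<lambda>_. 0) (\<lambda>zs. lcons (evstep (asg \<tau>1 \<tau>2 (zs!2)) (zs!1) (zs!0)) (zs!0)) m [t]
   = tab (asg \<tau>1 \<tau>2 t) m"
  by (induction m) auto

lemma recfn_tab: "recfn n fm \<Longrightarrow> recfn n ft \<Longrightarrow> recfn n (\<lambda>xs. tab (asg \<tau>1 \<tau>2 (ft xs)) (fm xs))"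
proof -
  assume fm: "recfn n fm" and ft: "recfn n ft"
  have "recfn (Suc (Suc 0)) (\<lambda>zs. primh (\<lambda>_. 0) (\<lambda>zs. lcons (evstep (asg \<tau>1 \<tau>2 (zs!2)) (zs!1) (zs!0)) (zs!0))
           (hd zs) (tl zs))"
    by (intro recfn_prim recfn_const recfn_lcons recfn_evstep recfn_proj) auto
  hence "recfn (Suc (Suc 0)) (\<lambda>zs. tab (asg \<tau>1 \<tau>2 (zs!1)) (zs!0))"
  proof (rule recfn_cong)
    fix zs :: "nat list" assume "length zs = Suc (Suc 0)"
    then obtain m t where "zs = [m, t]" by (auto simp: length_Suc_conv)
    thus "primh (\<lambda>_. 0) (\<lambda>zs. lcons (evstep (asg \<tau>1 \<tau>2 (zs!2)) (zs!1) (zs!0)) (zs!0)) (hd zs) (tl zs)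
          = tab (asg \<tau>1 \<tau>2 (zs!1)) (zs!0)" using primh_tab[of m t] by simp
  qed
  hence "recfn 2 (\<lambda>zs. tab (asg \<tau>1 \<tau>2 (zs!1)) (zs!0))" by (simp add: numeral_2_eq_2)
  from recfn_comp2[OF this fm ft] show ?thesis by simp
qed

lemma recfn_ev: "recfn n fm \<Longrightarrow> recfn n ft \<Longrightarrow> recfn n (\<lambda>xs. ev (asg \<tau>1 \<tau>2 (ft xs)) (fm xs))"
  unfolding ev_def by (intro recfn_evstep recfn_tab)

end



lemma peval_cong: "(\<forall>i\<in>pvars D. x i = y i) \<Longrightarrow> peval x D = peval y D"
  by (induction D) auto

lemma pcode_inj: "pcode p = pcode q \<Longrightarrow> p = q"
proof (induction p arbitrary: q)
  case (PVar i) thus ?case by (cases q) (auto, presburger+)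
next
  case (PConst c) thus ?case by (cases q) (auto simp: int_encode_eq, presburger+)
next
  case (PAdd p1 p2) thus ?case by (cases q) (auto, presburger+)
next
  case (PMul p1 p2) thus ?case by (cases q) (auto, presburger+)
qed

lemma sols_ext:
  assumes "pvars D \<subseteq> {..<n}" "xs \<in> solutions_in R (n, D)" "r \<in> R"
  shows "xs @ [r] \<in> solutions_in R (Suc n, D)"
proof -
  have L: "length xs = n" using assms(2) by (simp add: solutions_in_def)
  have "peval (\<lambda>i. (xs @ [r]) ! i) D = peval (\<lambda>i. xs ! i) D"
    by (rule peval_cong) (use assms(1) L in \<open>auto simp: nth_append\<close>)
  thus ?thesis using assms(2,3) by (auto simp: solutions_in_def)
qed

lemma sols_take:
  assumes "pvars D \<subseteq> {..<n}" "ys \<in> solutions_in R (Suc n, D)"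
  shows "take n ys \<in> solutions_in R (n, D)"
proof -
  have L: "length ys = Suc n" using assms(2) by (simp add: solutions_in_def)
  have "peval (\<lambda>i. (take n ys) ! i) D = peval (\<lambda>i. ys ! i) D"
    by (rule peval_cong) (use assms(1) L in \<open>auto\<close>)
  thus ?thesis using assms(2) L by (auto simp: solutions_in_def dest: in_set_takeD)
qed

lemma sols_infinite:
  assumes "infinite R" "pvars D \<subseteq> {..<n}" "solutions_in R (n, D) \<noteq> {}"
  shows "infinite (solutions_in R (Suc n, D))"
proof
  assume fin: "finite (solutions_in R (Suc n, D))"
  obtain xs where xs: "xs \<in> solutions_in R (n, D)" using assms(3) by blast
  have "(\<lambda>r. xs @ [r]) ` R \<subseteq> solutions_in R (Suc n, D)" using sols_ext[OF assms(2) xs] by blast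
  hence "finite ((\<lambda>r. xs @ [r]) ` R)" using fin finite_subset by blast
  moreover have "inj_on (\<lambda>r. xs @ [r]) R" by (rule inj_onI) simp
  ultimately show False using assms(1) finite_imageD by blast
qed

lemma sols_empty:
  assumes "pvars D \<subseteq> {..<n}" "solutions_in R (n, D) = {}"
  shows "solutions_in R (Suc n, D) = {}"
  using sols_take[OF assms(1)] assms(2) by blast



theorem theorem2:
  fixes R :: "rat set" and \<tau>1 \<tau>2 :: "nat \<Rightarrow> int"
  assumes "infinite R"
    and "computable_int_fun \<tau>1" and "computable_int_fun \<tau>2"
    and "\<forall>k. \<tau>2 k \<noteq> 0"
    and "{of_int (\<tau>1 k) / of_int (\<tau>2 k) | k. True} = R"
    and "rec_enum {eq_code e | e. valid_eq e \<and> finite (solutions_in R e)}"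
  shows "\<exists>f. \<forall>e. valid_eq e \<longrightarrow>
           reval f [eq_code e] (if solutions_in R e \<noteq> {} then 1 else 0)"
proof -
  note inf = assms(1) and c1 = assms(2) and c2 = assms(3) and nz = assms(4) and img = assms(5)
  obtain P where P: "{eq_code e | e. valid_eq e \<and> finite (solutions_in R e)} = {n. \<exists>y. reval P [n] y}"
    using assms(6) unfolding rec_enum_def by blast
  define cq where "cq c = pe (fst (pd c) + 1) (snd (pd c))" for c
  define Bp where "Bp xs = (let v = ev (asg \<tau>1 \<tau>2 (xs!0)) (snd (pd (xs!1))) in
                      fst (pd (fst (pd v))) = snd (pd (fst (pd v))))" for xs
  define Ap where "Ap xs = (enc (feval P (xs!0) [cq (xs!1)]) \<noteq> 0)" for xs
  define rv where "rv k = (of_int (\<tau>1 k) / of_int (\<tau>2 k) :: rat)" for k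
  have TP: "recfn 2 (\<lambda>ys. enc (feval P (hd ys) (tl ys)))" using trans_all[of 1 P] by (simp add: numeral_2_eq_2)
  have "recfn 2 (\<lambda>xs. (\<lambda>ys. enc (feval P (hd ys) (tl ys))) [xs!0, cq (xs!1)])"
    unfolding cq_def by (rule recfn_comp2[OF TP]) (intro recfn_pe recfn_add recfn_fst recfn_snd recfn_const recfn_proj; simp)+
  hence "recpred 2 (\<lambda>xs. \<not> (enc (feval P (xs!0) [cq (xs!1)]) = 0))"
    by (intro recpred_not recpred_eq recfn_const) simp
  hence RA: "recpred 2 Ap" unfolding Ap_def .
  have RB: "recpred 2 Bp" unfolding Bp_def Let_def
    by (intro recpred_eq recfn_fst recfn_snd recfn_ev[OF c1 c2] recfn_proj) auto
  define Q where "Q xs = (Ap xs \<or> Bp xs)" for xs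
  have "recpred 2 Q" unfolding Q_def by (rule recpred_or[OF RA RB])
  hence "recfn 2 (\<lambda>xs. 1 - (if Q xs then 1 else 0))" unfolding recpred_def by (intro recfn_sub recfn_const)
  then obtain FQ where FQ: "rc 2 FQ (\<lambda>xs. 1 - (if Q xs then 1 else 0))" unfolding recfn_def by blast
  obtain FB where FB: "rc 2 FB (\<lambda>xs. if Bp xs then 1 else 0)" using RB unfolding recpred_def recfn_def by auto
  show ?thesis
  proof (intro exI allI impI)
    fix e assume valid: "valid_eq e"
    obtain n D where e: "e = (n, D)" by fastforce
    have vars: "pvars D \<subseteq> {..<n}" and n1: "n \<ge> 1" using valid e by (auto simp: valid_eq_def)
    define c where "c = eq_code e"
    have pdc: "pd c = (n, pcode D)" by (simp add: c_def eq_code_def e)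
    have rvR: "rv k \<in> R" for k using img unfolding rv_def by blast
    have asg_ok: "dok (asg \<tau>1 \<tau>2 t i) \<and> rval (asg \<tau>1 \<tau>2 t i) = rv (seq t i)" for t i
      using nz by (simp add: asg_def dok_def rval_def ival_fromenc rv_def)
    have Bchar: "Bp [t, c] \<longleftrightarrow> peval (\<lambda>i. rv (seq t i)) D = 0" for t
    proof -
      have V: "ev (asg \<tau>1 \<tau>2 t) (pcode D) = valc (asg \<tau>1 \<tau>2 t) D" by (rule ev_pcode)
      from valc_ok[of "asg \<tau>1 \<tau>2 t" D] asg_ok
      have "dok (valc (asg \<tau>1 \<tau>2 t) D)" "rval (valc (asg \<tau>1 \<tau>2 t) D) = peval (\<lambda>i. rv (seq t i)) D"
        by auto
      thus ?thesis unfolding Bp_def Let_def using pdc V rval_zero[of "valc (asg \<tau>1 \<tau>2 t) D"] by simp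
    qed
    have Asound: "solutions_in R e = {}" if "Ap [t, c]" for t
    proof -
      have "enc (feval P t [cq c]) \<noteq> 0" using that by (simp add: Ap_def)
      then obtain y where "feval P t [cq c] = Some y" by (cases "feval P t [cq c]") auto
      hence "reval P [cq c] y" by (rule feval_sound)
      hence "cq c \<in> {eq_code e | e. valid_eq e \<and> finite (solutions_in R e)}" using P by blast
      then obtain e2 where e2: "cq c = eq_code e2" "finite (solutions_in R e2)" by blast
      have "pe (Suc n) (pcode D) = pe (fst e2) (pcode (snd e2))" using e2(1) pdc by (simp add: cq_def eq_code_def)
      hence "e2 = (Suc n, D)" using pcode_inj by (cases e2) auto
      hence "finite (solutions_in R (Suc n, D))" using e2(2) by simp
      thus ?thesis using sols_infinite[OF inf vars] e by auto
    qed
    have Acomp: "\<exists>t. Ap [t, c]" if "solutions_in R e = {}"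
    proof -
      have "solutions_in R (Suc n, D) = {}" using sols_empty[OF vars] that e by simp
      moreover have "valid_eq (Suc n, D)" using vars by (auto simp: valid_eq_def)
      ultimately have "cq c \<in> {eq_code e | e. valid_eq e \<and> finite (solutions_in R e)}"
        using pdc by (force simp: cq_def eq_code_def)
      then obtain y where "reval P [cq c] y" using P by blast
      then obtain t where "feval P t [cq c] = Some y" using feval_complete by blast
      hence "Ap [t, c]" by (simp add: Ap_def)
      thus ?thesis by blast
    qed
    have Bsound: "solutions_in R e \<noteq> {}" if "Bp [t, c]" for t
    proof -
      let ?xs = "map (\<lambda>i. rv (seq t i)) [0..<n]"
      have "peval (\<lambda>i. ?xs ! i) D = peval (\<lambda>i. rv (seq t i)) D"
        by (rule peval_cong) (use vars in auto)
      hence "?xs \<in> solutions_in R e" using that Bchar rvR by (auto simp: solutions_in_def e)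
      thus ?thesis by blast
    qed
    have Bcomp: "\<exists>t. Bp [t, c]" if ne: "solutions_in R e \<noteq> {}"
    proof -
      obtain xs where xs: "xs \<in> solutions_in R e" using ne by blast
      hence L: "length xs = n" and S: "set xs \<subseteq> R" and Z: "peval (\<lambda>i. xs ! i) D = 0"
        by (auto simp: solutions_in_def e)
      have "\<forall>i<n. \<exists>k. rv k = xs ! i" using S L img unfolding rv_def by (auto simp: subset_iff) (metis nth_mem)
      then obtain kf where kf: "\<forall>i<n. rv (kf i) = xs ! i" by metis
      let ?t = "tenc (map kf [0..<n])"
      have "peval (\<lambda>i. rv (seq ?t i)) D = peval (\<lambda>i. xs ! i) D"
        by (rule peval_cong) (use vars kf in \<open>auto simp: seq_tenc\<close>)
      thus ?thesis using Z Bchar by auto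
    qed
    have ex: "\<exists>m. Q [m, c]" unfolding Q_def
      using Acomp Bcomp by blast
    define ts where "ts = (LEAST m. 1 - (if Q (m # [c]) then 1 else 0) = (0::nat))"
    have "reval (RMin FQ) [c] ts"
    proof -
      obtain m0 where m0: "Q [m0, c]" using ex by blast
      show ?thesis unfolding ts_def by (rule reval_min[OF FQ[unfolded numeral_2_eq_2], of "[c]" m0]) (use m0 in auto)
    qed
    moreover have Qts: "Q [ts, c]"
    proof -
      obtain m where "Q [m, c]" using ex by blast
      hence "1 - (if Q (m # [c]) then 1 else 0) = (0::nat)" by simp
      hence "1 - (if Q (ts # [c]) then 1 else 0) = (0::nat)" unfolding ts_def by (rule LeastI)
      thus ?thesis by (auto split: if_splits)
    qed
    moreover have "reval (RProj 0) [c] c" using reval.proj[of 0 "[c]"] by simp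
    ultimately have "reval (RComp FB [RMin FQ, RProj 0]) [c] (if Bp [ts, c] then 1 else 0)"
      using FB unfolding rc_def
      by (intro reval.comp[where ys="[ts, c]"]) (auto simp: less_Suc_eq nth_Cons' intro: reval.proj)
    moreover have "(if Bp [ts, c] then 1 else 0) = (if solutions_in R e \<noteq> {} then 1 else (0::nat))"
      using Qts Asound Bsound unfolding Q_def by auto
    ultimately show "reval (RComp FB [RMin FQ, RProj 0]) [eq_code e] (if solutions_in R e \<noteq> {} then 1 else 0)"
      unfolding c_def by simp
  qed
qed


end
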